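(* Let $d\ge2$ and let $\sigma,\gamma$ satisfy $$\sigma\in(\max\{-d,-3\},0)\setminus\{-2,-d/2\},\qquad \gamma-d-1\ge\sigma.$$ Then there exist $k>0$ and $b>0$ such that the set $$\mathcal M=\{\psi:\mathbb R^d\to\mathbb R \text{ measurable}:\ |\psi(\eta)|<k|\eta|^\sigma e^{-b|\eta|}\ \text{for all }\eta\}$$ is invariant under the azimuthal renormalization operator $\mathcal R_\beta$ for every $\beta\in(0,1)$.
   Context: Spherical coordinates on $\mathbb R^d$: $\eta=(|\eta|,\hat\eta_1,\dots,\hat\eta_{d-1})$, polar angles $\hat\eta_1,\dots,\hat\eta_{d-2}$, azimuthal angle $\hat\eta_{d-1}$. Let $c=\gamma-d-1$. For $\beta\in(0,1)$ the azimuthal renormalization operator on scalar $\psi$ is $$\mathcal R_\beta[\psi](\eta)=\beta^{c}e^{|\eta|^\gamma(1-\beta^{-\gamma})}\psi(\eta/\beta)+\gamma\int_1^{1/\beta}\frac{e^{|\eta|^\gamma(1-t^\gamma)}\,|\eta|\prod_{k=1}^{d-2}\sin\hat\eta_k}{t^{c}}\int_{\mathbb R^d}\psi(x)\,\psi(\eta t-x)\cos\hat x_{d-1}\,\sin\widehat{(\eta t-x)}_{d-1}\,dx\,dt,$$ with azimuthal angles $\hat x_{d-1}$, $\widehat{(\eta t-x)}_{d-1}$ measured relative to that of $\eta$ and empty product $=1$ for $d=2$. *)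

theory Defs
  imports "HOL-Analysis.Analysis"
begin

text \<open>Spherical coordinates on R^d, d = CARD('n).  The coordinates of x are
  ordered by an enumeration e of the index type: e 0, ..., e (d-1) correspond to
  x_1, ..., x_d.  Standard convention:
  x_1 = r cos th_1, x_2 = r sin th_1 cos th_2, ...,
  x_{d-1} = r sin th_1 ... sin th_{d-2} cos th_{d-1},
  x_d = r sin th_1 ... sin th_{d-2} sin th_{d-1}.\<close>

definition sph_tail :: "(nat \<Rightarrow> 'n::finite) \<Rightarrow> real^'n \<Rightarrow> nat \<Rightarrow> real" where
  "sph_tail e x k = sqrt (\<Sum>m\<in>{k..<CARD('n)}. (x $ e m)^2)"

text \<open>Polar angle th_k, for k = 1, ..., d-2 (values in [0, pi]).\<close>
definition polar_angle :: "(nat \<Rightarrow> 'n::finite) \<Rightarrow> real^'n \<Rightarrow> nat \<Rightarrow> real" where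
  "polar_angle e x k = arccos (x $ e (k - 1) / sph_tail e x (k - 1))"

definition azimuthal_angle :: "(nat \<Rightarrow> 'n::finite) \<Rightarrow> real^'n \<Rightarrow> real" where
  "azimuthal_angle e x = Arg (Complex (x $ e (CARD('n) - 2)) (x $ e (CARD('n) - 1)))"

definition renorm_op ::
  "(nat \<Rightarrow> 'n::finite) \<Rightarrow> real \<Rightarrow> real \<Rightarrow> (real^'n \<Rightarrow> real) \<Rightarrow> real^'n \<Rightarrow> real" where
  "renorm_op e \<gamma> \<beta> \<psi> \<eta> =
     (let c = \<gamma> - real CARD('n) - 1 in
       \<beta> powr c * exp (norm \<eta> powr \<gamma> * (1 - \<beta> powr (-\<gamma>))) * \<psi> ((1 / \<beta>) *\<^sub>R \<eta>)
     + \<gamma> * (LBINT t=1..1/\<beta>.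
          exp (norm \<eta> powr \<gamma> * (1 - t powr \<gamma>)) * norm \<eta>
            * (\<Prod>k\<in>{1..CARD('n) - 2}. sin (polar_angle e \<eta> k)) / t powr c
          * (\<integral>x. \<psi> x * \<psi> (t *\<^sub>R \<eta> - x)
                 * cos (azimuthal_angle e x - azimuthal_angle e \<eta>)
                 * sin (azimuthal_angle e (t *\<^sub>R \<eta> - x) - azimuthal_angle e \<eta>) \<partial>lborel)))"

text \<open>The set M: measurable psi with |psi eta| < k |eta|^sigma e^{-b|eta|};
  at eta = 0 the bound is +infinity (sigma < 0), so no condition is imposed there.\<close>
definition M_set :: "real \<Rightarrow> real \<Rightarrow> real \<Rightarrow> (real^'n::finite \<Rightarrow> real) set" where
  "M_set \<sigma> k b = {\<psi>. \<psi> \<in> borel_measurable lborel \<and>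
     (\<forall>\<eta>. \<eta> \<noteq> 0 \<longrightarrow> \<bar>\<psi> \<eta>\<bar> < k * norm \<eta> powr \<sigma> * exp (- b * norm \<eta>))}"

end

theory Submission
  imports Defs
begin


lemma cos_Arg_eq: "cos (Arg z) = (if z = 0 then 1 else Re z / norm z)"
  by (simp add: cos_Arg Arg_zero)
lemma sin_Arg_eq: "sin (Arg z) = (if z = 0 then 0 else Im z / norm z)"
  by (simp add: sin_Arg Arg_zero)

lemma meas_cosArg[measurable]: "(\<lambda>z::complex. cos (Arg z)) \<in> borel_measurable borel"
  unfolding cos_Arg_eq by measurable
lemma meas_sinArg[measurable]: "(\<lambda>z::complex. sin (Arg z)) \<in> borel_measurable borel"
  unfolding sin_Arg_eq by measurable

lemma meas_CA[measurable]: "(\<lambda>x. cos (azimuthal_angle e x)) \<in> borel_measurable borel"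
  unfolding azimuthal_angle_def
  by (rule measurable_compose[OF _ meas_cosArg]) (unfold Complex_eq, measurable)
lemma meas_SA[measurable]: "(\<lambda>x. sin (azimuthal_angle e x)) \<in> borel_measurable borel"
  unfolding azimuthal_angle_def
  by (rule measurable_compose[OF _ meas_sinArg]) (unfold Complex_eq, measurable)

lemma sin_polar_eq: fixes x :: "real^'n::finite" shows "sin (polar_angle e x k) = sqrt (1 - (x $ e (k - 1) / sph_tail e x (k - 1))^2)"
proof -
  let ?u = "x $ e (k - 1) / sph_tail e x (k - 1)"
  have "\<bar>?u\<bar> \<le> 1"
  proof (cases "k - 1 < CARD('n)")
    case True
    have "(x $ e (k-1))^2 \<le> (\<Sum>m\<in>{k-1..<CARD('n)}. (x $ e m)^2)"
      using True by (intro member_le_sum) auto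
    then have "sqrt ((x $ e (k-1))^2) \<le> sph_tail e x (k-1)"
      unfolding sph_tail_def by (rule real_sqrt_le_mono)
    then have "\<bar>x $ e (k-1)\<bar> \<le> sph_tail e x (k-1)" by simp
    then show ?thesis by (auto simp: abs_divide divide_le_eq_1)
  next
    case False
    then show ?thesis by (simp add: sph_tail_def)
  qed
  then have h1: "?u \<le> 1" and h2: "- 1 \<le> ?u" using abs_le_D1 abs_le_D2 by fastforce+
  show ?thesis unfolding polar_angle_def by (rule sin_arccos[OF h2 h1])
qed

lemma meas_P[measurable]: "(\<lambda>x. sin (polar_angle e x k)) \<in> borel_measurable borel"
  unfolding sin_polar_eq sph_tail_def by measurable

lemma meas_renorm:
  assumes "\<psi> \<in> borel_measurable lborel"
  shows "renorm_op e \<gamma> \<beta> \<psi> \<in> borel_measurable lborel"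
proof -
  have [measurable]: "\<psi> \<in> borel_measurable borel" using assms by (simp add: measurable_lborel1)
  have [measurable]: "\<And>a b. einterval a b \<in> sets borel" by (simp add: einterval_def)
  show ?thesis
    unfolding renorm_op_def Let_def interval_lebesgue_integral_def set_lebesgue_integral_def
       cos_diff sin_diff
    by measurable
qed



lemma dyadic_integral:
  fixes c :: "'a::euclidean_space" and f :: "'a \<Rightarrow> ennreal"
  assumes pt: "\<And>x. f x \<le> (\<Sum>j. ennreal (a j) * indicator (cball c (r j)) x)"
    and a: "\<And>j. a j \<ge> 0" and r: "\<And>j. r j \<ge> 0"
  shows "(\<integral>\<^sup>+x. f x \<partial>lborel) \<le> (\<Sum>j. ennreal (a j * unit_ball_vol (DIM('a)) * r j ^ DIM('a)))"
proof -
  have "(\<integral>\<^sup>+x. f x \<partial>lborel) \<le> (\<integral>\<^sup>+x. (\<Sum>j. ennreal (a j) * indicator (cball c (r j)) x) \<partial>lborel)"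
    by (intro nn_integral_mono pt)
  also have "\<dots> = (\<Sum>j. \<integral>\<^sup>+x. ennreal (a j) * indicator (cball c (r j)) x \<partial>lborel)"
    by (intro nn_integral_suminf borel_measurable_times_ennreal borel_measurable_indicator) auto
  also have "\<dots> = (\<Sum>j. ennreal (a j * unit_ball_vol (DIM('a)) * r j ^ DIM('a)))"
    using a r by (simp add: nn_integral_cmult_indicator emeasure_cball ennreal_mult' mult.assoc
        unit_ball_vol_nonneg)
  finally show ?thesis .
qed

lemma single_le_suminf_ennreal:
  fixes g :: "nat \<Rightarrow> ennreal"
  shows "g J \<le> (\<Sum>j. g j)"
proof -
  have "g J \<le> sum g {..<Suc J}" by (intro member_le_sum) auto
  also have "\<dots> \<le> (\<Sum>j. g j)" by (intro sum_le_suminf) auto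
  finally show ?thesis .
qed

lemma geom_sum_ennreal:
  assumes "0 \<le> K" "0 \<le> \<rho>" "\<rho> < 1"
  shows "(\<Sum>j. ennreal (K * \<rho> ^ j)) = ennreal (K / (1 - \<rho>))"
proof -
  have s: "summable (\<lambda>j. K * \<rho> ^ j)" using assms by (intro summable_mult summable_geometric) auto
  have "(\<Sum>j. ennreal (K * \<rho> ^ j)) = ennreal (\<Sum>j. K * \<rho> ^ j)"
    using s assms by (intro suminf_ennreal2) auto
  also have "(\<Sum>j. K * \<rho> ^ j) = K / (1 - \<rho>)"
    using assms by (simp add: suminf_mult suminf_geometric summable_geometric divide_simps)
  finally show ?thesis .
qed

lemma half_pow_powr: "((1/2::real) ^ j) powr q = ((1/2) powr q) ^ j"
  by (simp add: powr_realpow[symmetric] powr_powr mult.commute powr_power)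

lemma ball_term:
  fixes q R V :: real and d :: nat
  assumes R: "R > 0"
  shows "(R * (1/2) ^ Suc j) powr q * V * (R * (1/2) ^ j) ^ d
     = V * (1/2) powr q * R powr (q + d) * ((1/2) powr (q + d)) ^ j"
proof -
  have "(R * (1/2) ^ Suc j) powr q = R powr q * (1/2) powr q * ((1/2) powr q) ^ j"
  proof -
    have "(R * (1/2) ^ Suc j) powr q = R powr q * ((1/2) ^ Suc j) powr q"
      by (rule powr_mult)
    also have "((1/2::real) ^ Suc j) powr q = ((1/2) powr q) ^ Suc j" by (rule half_pow_powr)
    finally show ?thesis by simp
  qed
  moreover have "(R * (1/2) ^ j) ^ d = R powr d * ((1/2) ^ d) ^ j"
    using R by (simp add: power_mult_distrib powr_realpow power_mult[symmetric] mult.commute)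
  moreover have "R powr q * R powr d = R powr (q + d)" by (simp add: powr_add)
  moreover have "((1/2::real) powr q) ^ j * ((1/2) ^ d) ^ j = ((1/2) powr (q + d)) ^ j"
    by (simp add: power_mult_distrib[symmetric] powr_add powr_realpow)
  ultimately show ?thesis by (simp add: algebra_simps)
qed

lemma ball_point:
  fixes q R s :: real
  assumes q: "q < 0" and R: "R > 0" and s: "0 < s" "s \<le> R"
  shows "\<exists>J. s powr q \<le> (R * (1/2) ^ Suc J) powr q \<and> s \<le> R * (1/2) ^ J"
proof -
  obtain n where n: "(1/2::real) ^ n < s / R" using real_arch_pow_inv[of "s/R" "1/2"] s R by auto
  have ex: "R * (1/2) ^ Suc n < s"
  proof -
    have "R * (1/2::real) ^ Suc n \<le> R * (1/2) ^ n" using R by (intro mult_left_mono) auto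
    also have "\<dots> < s" using n R by (simp add: field_simps)
    finally show ?thesis .
  qed
  define J where "J = (LEAST j. R * (1/2) ^ Suc j < s)"
  have J1: "R * (1/2) ^ Suc J < s" unfolding J_def by (rule LeastI[of _ n]) (rule ex)
  have J2: "s \<le> R * (1/2) ^ J"
  proof (cases J)
    case 0 then show ?thesis using s by simp
  next
    case (Suc m)
    have "\<not> R * (1/2) ^ Suc m < s" using not_less_Least[of m "\<lambda>j. R * (1/2) ^ Suc j < s"]
      Suc J_def by auto
    then show ?thesis using Suc by simp
  qed
  have "s powr q \<le> (R * (1/2) ^ Suc J) powr q"
    using J1 R q by (intro powr_mono2') auto
  with J2 show ?thesis by blast
qed

lemma ball_integral:
  fixes q :: real
  assumes q: "q < 0" "q + DIM('a) > 0"
  shows "\<exists>C\<ge>0. \<forall>(c::'a::euclidean_space) R. R > 0 \<longrightarrow>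
     (\<integral>\<^sup>+x. ennreal (norm (x - c) powr q * indicator (cball c R) x) \<partial>lborel) \<le> ennreal (C * R powr (q + DIM('a)))"
proof -
  define d where "d = DIM('a)"
  define V where "V = unit_ball_vol (real d)"
  have V: "V \<ge> 0" unfolding V_def by (rule unit_ball_vol_nonneg) simp
  define \<rho> where "\<rho> = (1/2::real) powr (q + d)"
  have "(1/2::real) powr (q + d) < 1 powr (q + d)"
    using q unfolding d_def by (intro powr_less_mono2) auto
  then have \<rho>: "0 \<le> \<rho>" "\<rho> < 1" unfolding \<rho>_def by auto
  define C where "C = V * (1/2) powr q / (1 - \<rho>)"
  have C: "C \<ge> 0" unfolding C_def using V \<rho> by auto
  show ?thesis
  proof (intro exI[of _ C] conjI allI impI C)
    fix c :: 'a and R :: real assume R: "R > 0"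
    define a where "a j = (R * (1/2) ^ Suc j) powr q" for j
    define r where "r j = R * (1/2::real) ^ j" for j
    have "(\<integral>\<^sup>+x. ennreal (norm (x - c) powr q * indicator (cball c R) x) \<partial>lborel)
        \<le> (\<Sum>j. ennreal (a j * unit_ball_vol (DIM('a)) * r j ^ DIM('a)))"
    proof (rule dyadic_integral)
      fix x :: 'a
      show "ennreal (norm (x - c) powr q * indicator (cball c R) x)
         \<le> (\<Sum>j. ennreal (a j) * indicator (cball c (r j)) x)"
      proof (cases "x \<noteq> c \<and> x \<in> cball c R")
        case True
        then have s: "0 < norm (x - c)" "norm (x - c) \<le> R" by (auto simp: dist_norm norm_minus_commute)
        obtain J where J: "norm (x - c) powr q \<le> a J" "norm (x - c) \<le> r J"
          using ball_point[OF q(1) R s] unfolding a_def r_def by blast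
        have "ennreal (norm (x - c) powr q * indicator (cball c R) x) \<le> ennreal (a J) * indicator (cball c (r J)) x"
          using J True by (auto simp: dist_norm norm_minus_commute indicator_def intro!: ennreal_leI)
        also have "\<dots> \<le> (\<Sum>j. ennreal (a j) * indicator (cball c (r j)) x)"
          by (rule single_le_suminf_ennreal)
        finally show ?thesis .
      next
        case False
        then show ?thesis by (auto simp: indicator_def)
      qed
    qed (use R in \<open>auto simp: a_def r_def\<close>)
    also have "(\<Sum>j. ennreal (a j * unit_ball_vol (DIM('a)) * r j ^ DIM('a)))
        = (\<Sum>j. ennreal ((V * (1/2) powr q * R powr (q + d)) * \<rho> ^ j))"
      unfolding a_def r_def V_def \<rho>_def d_def by (intro arg_cong[where f=suminf] ext arg_cong[where f=ennreal] ball_term R)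
    also have "\<dots> = ennreal ((V * (1/2) powr q * R powr (q + d)) / (1 - \<rho>))"
      using V \<rho> by (intro geom_sum_ennreal) auto
    also have "\<dots> = ennreal (C * R powr (q + DIM('a)))" unfolding C_def d_def by simp
    finally show "(\<integral>\<^sup>+x. ennreal (norm (x - c) powr q * indicator (cball c R) x) \<partial>lborel) \<le> ennreal (C * R powr (q + DIM('a)))" .
  qed
qed

lemma two_pow_powr: "((2::real) ^ j) powr q = (2 powr q) ^ j"
  by (simp add: powr_realpow[symmetric] powr_powr mult.commute powr_power)

lemma tail_term:
  fixes p R V :: real and d :: nat
  assumes R: "R > 0"
  shows "(R * 2 ^ j) powr p * V * (R * 2 ^ Suc j) ^ d
     = V * 2 ^ d * R powr (p + d) * (2 powr (p + d)) ^ j"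
proof -
  have h1: "(R * 2 ^ j) powr p = R powr p * (2 powr p) ^ j"
    by (simp add: powr_mult two_pow_powr)
  have h2: "(R * 2 ^ Suc j) ^ d = 2 ^ d * (R powr d * ((2::real) ^ d) ^ j)"
    using R by (simp add: power_mult_distrib powr_realpow power_mult[symmetric] mult.commute)
  have h3: "R powr p * R powr d = R powr (p + d)" by (simp add: powr_add)
  have h4: "((2::real) powr p) ^ j * (2 ^ d) ^ j = (2 powr (p + d)) ^ j"
    by (simp add: power_mult_distrib[symmetric] powr_add powr_realpow)
  have "(R * 2 ^ j) powr p * V * (R * 2 ^ Suc j) ^ d
      = V * 2 ^ d * (R powr p * R powr d) * (((2::real) powr p) ^ j * (2 ^ d) ^ j)"
    unfolding h1 h2 by (simp only: ac_simps)
  also have "\<dots> = V * 2 ^ d * R powr (p + d) * (2 powr (p + d)) ^ j" by (simp only: h3 h4)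
  finally show ?thesis .
qed

lemma tail_point:
  fixes p R s :: real
  assumes p: "p < 0" and R: "R > 0" and s: "R < s"
  shows "\<exists>J. s powr p \<le> (R * 2 ^ J) powr p \<and> s \<le> R * 2 ^ Suc J"
proof -
  obtain n where n: "s / R < (2::real) ^ n" using real_arch_pow[of 2 "s/R"] by auto
  have ex: "s \<le> R * 2 ^ Suc n"
  proof -
    have "s < R * 2 ^ n" using n R by (simp add: field_simps)
    also have "\<dots> \<le> R * 2 ^ Suc n" using R by (intro mult_left_mono) auto
    finally show ?thesis by simp
  qed
  define J where "J = (LEAST j. s \<le> R * 2 ^ Suc j)"
  have J1: "s \<le> R * 2 ^ Suc J" unfolding J_def by (rule LeastI[of _ n]) (rule ex)
  have J2: "R * 2 ^ J \<le> s"
  proof (cases J)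
    case 0 then show ?thesis using s by simp
  next
    case (Suc m)
    have "\<not> s \<le> R * 2 ^ Suc m" using not_less_Least[of m "\<lambda>j. s \<le> R * 2 ^ Suc j"]
      Suc J_def by auto
    then show ?thesis using Suc by simp
  qed
  have "s powr p \<le> (R * 2 ^ J) powr p"
    using J2 R p by (intro powr_mono2') auto
  with J1 show ?thesis by blast
qed

lemma tail_integral:
  fixes p :: real
  assumes p: "p + DIM('a) < 0"
  shows "\<exists>C\<ge>0. \<forall>(c::'a::euclidean_space) R. R > 0 \<longrightarrow>
     (\<integral>\<^sup>+x. ennreal (norm (x - c) powr p * indicator (- cball c R) x) \<partial>lborel) \<le> ennreal (C * R powr (p + DIM('a)))"
proof -
  have p0: "p < 0" using p by simp
  define d where "d = DIM('a)"
  define V where "V = unit_ball_vol (real d)"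
  have V: "V \<ge> 0" unfolding V_def by (rule unit_ball_vol_nonneg) simp
  define \<rho> where "\<rho> = (2::real) powr (p + d)"
  have \<rho>: "0 \<le> \<rho>" "\<rho> < 1" unfolding \<rho>_def using p unfolding d_def by (auto intro!: powr_less_one)
  define C where "C = V * 2 ^ d / (1 - \<rho>)"
  have C: "C \<ge> 0" unfolding C_def using V \<rho> by auto
  show ?thesis
  proof (intro exI[of _ C] conjI allI impI C)
    fix c :: 'a and R :: real assume R: "R > 0"
    define a where "a j = (R * 2 ^ j) powr p" for j
    define r where "r j = R * (2::real) ^ Suc j" for j
    have "(\<integral>\<^sup>+x. ennreal (norm (x - c) powr p * indicator (- cball c R) x) \<partial>lborel)
        \<le> (\<Sum>j. ennreal (a j * unit_ball_vol (DIM('a)) * r j ^ DIM('a)))"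
    proof (rule dyadic_integral)
      fix x :: 'a
      show "ennreal (norm (x - c) powr p * indicator (- cball c R) x)
         \<le> (\<Sum>j. ennreal (a j) * indicator (cball c (r j)) x)"
      proof (cases "x \<in> cball c R")
        case False
        then have s: "R < norm (x - c)" by (auto simp: dist_norm norm_minus_commute)
        obtain J where J: "norm (x - c) powr p \<le> a J" "norm (x - c) \<le> r J"
          using tail_point[OF p0 R s] unfolding a_def r_def by blast
        have "ennreal (norm (x - c) powr p * indicator (- cball c R) x) \<le> ennreal (a J) * indicator (cball c (r J)) x"
          using J False by (auto simp: dist_norm norm_minus_commute indicator_def intro!: ennreal_leI)
        also have "\<dots> \<le> (\<Sum>j. ennreal (a j) * indicator (cball c (r j)) x)"
          by (rule single_le_suminf_ennreal)
        finally show ?thesis .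
      next
        case True
        then show ?thesis by (auto simp: indicator_def)
      qed
    qed (use R in \<open>auto simp: a_def r_def\<close>)
    also have "(\<Sum>j. ennreal (a j * unit_ball_vol (DIM('a)) * r j ^ DIM('a)))
        = (\<Sum>j. ennreal ((V * 2 ^ d * R powr (p + d)) * \<rho> ^ j))"
      unfolding a_def r_def V_def \<rho>_def d_def by (intro arg_cong[where f=suminf] ext arg_cong[where f=ennreal] tail_term R)
    also have "\<dots> = ennreal ((V * 2 ^ d * R powr (p + d)) / (1 - \<rho>))"
      using V \<rho> by (intro geom_sum_ennreal) auto
    also have "\<dots> = ennreal (C * R powr (p + DIM('a)))" unfolding C_def d_def by simp
    finally show "(\<integral>\<^sup>+x. ennreal (norm (x - c) powr p * indicator (- cball c R) x) \<partial>lborel) \<le> ennreal (C * R powr (p + DIM('a)))" .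
  qed
qed



lemma exp_pair: "exp (- a) * exp (- b) \<le> exp (- s)" if "s \<le> a + b" for a b s :: real
  using that by (simp add: exp_add[symmetric])

lemma L1:
  fixes a b s \<sigma> :: real
  assumes "\<sigma> < 0" "a > 0" "b > 0" "s > 0" "s \<le> a + b" "a \<le> s / 2"
  shows "a powr \<sigma> * exp (- a) * (b powr \<sigma> * exp (- b)) \<le> exp (- s) * ((s/2) powr \<sigma> * a powr \<sigma>)"
proof -
  have "b powr \<sigma> \<le> (s/2) powr \<sigma>" by (rule powr_mono2') (use assms in auto)
  then have "a powr \<sigma> * b powr \<sigma> \<le> a powr \<sigma> * (s/2) powr \<sigma>" by (rule mult_left_mono) simp
  then have "(a powr \<sigma> * b powr \<sigma>) * (exp (- a) * exp (- b)) \<le> (a powr \<sigma> * (s/2) powr \<sigma>) * exp (- s)"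
    by (rule mult_mono) (use exp_pair[OF assms(5)] in auto)
  then show ?thesis by (simp add: algebra_simps)
qed

lemma L3:
  fixes a b s \<sigma> :: real
  assumes "\<sigma> < 0" "a > 0" "b > 0" "s > 0" "s \<le> a + b" "s / 2 < a" "s / 2 < b"
  shows "a powr \<sigma> * exp (- a) * (b powr \<sigma> * exp (- b)) \<le> exp (- s) * ((s/2) powr \<sigma> * (s/2) powr \<sigma>)"
proof -
  have 1: "b powr \<sigma> \<le> (s/2) powr \<sigma>" by (rule powr_mono2') (use assms in auto)
  have 2: "a powr \<sigma> \<le> (s/2) powr \<sigma>" by (rule powr_mono2') (use assms in auto)
  have "a powr \<sigma> * b powr \<sigma> \<le> (s/2) powr \<sigma> * (s/2) powr \<sigma>" by (rule mult_mono[OF 2 1]) auto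
  then have "(a powr \<sigma> * b powr \<sigma>) * (exp (- a) * exp (- b)) \<le> ((s/2) powr \<sigma> * (s/2) powr \<sigma>) * exp (- s)"
    by (rule mult_mono) (use exp_pair[OF assms(5)] in auto)
  then show ?thesis by (simp add: algebra_simps)
qed

lemma L4:
  fixes a b s \<sigma> M m d :: real
  assumes "\<sigma> < 0" "a > 0" "b > 0" "s > 0" "2 * s < a" "a - s \<le> b" "m = \<sigma> + d"
    and Mb: "exp (- a) \<le> M * a powr (- m)"
  shows "a powr \<sigma> * exp (- a) * (b powr \<sigma> * exp (- b)) \<le> exp (- s) * (2 powr (- \<sigma>) * M * a powr (\<sigma> - d))"
proof -
  have "b powr \<sigma> \<le> (a / 2) powr \<sigma>" by (rule powr_mono2') (use assms in auto)
  also have "(a / 2) powr \<sigma> = 2 powr (- \<sigma>) * a powr \<sigma>"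
    by (simp add: powr_divide powr_minus_divide)
  finally have 1: "b powr \<sigma> \<le> 2 powr (- \<sigma>) * a powr \<sigma>" .
  have 2: "exp (- b) \<le> exp (- s)" using assms by simp
  have "b powr \<sigma> * exp (- b) \<le> (2 powr (- \<sigma>) * a powr \<sigma>) * exp (- s)"
    by (rule mult_mono[OF 1 2]) auto
  moreover have "a powr \<sigma> * exp (- a) \<le> a powr \<sigma> * (M * a powr (- m))"
    by (rule mult_left_mono[OF Mb]) simp
  moreover have "0 \<le> M * a powr (- m)" using Mb exp_gt_zero[of "-a"] by linarith
  ultimately have "(a powr \<sigma> * exp (- a)) * (b powr \<sigma> * exp (- b))
     \<le> (a powr \<sigma> * (M * a powr (- m))) * ((2 powr (- \<sigma>) * a powr \<sigma>) * exp (- s))"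
    by (rule_tac mult_mono) auto
  also have "\<dots> = exp (- s) * (2 powr (- \<sigma>) * M * (a powr \<sigma> * a powr (- m) * a powr \<sigma>))"
    by (simp add: algebra_simps)
  also have "a powr \<sigma> * a powr (- m) * a powr \<sigma> = a powr (\<sigma> - d)"
    using assms by (simp add: powr_add[symmetric])
  finally show ?thesis .
qed

lemma exp_powr_bound:
  fixes m u :: real
  assumes "m > 0" "u > 0"
  shows "exp (- u) \<le> m powr m * u powr (- m)"
proof -
  have "u / m \<le> exp (u / m)" using exp_ge_add_one_self[of "u/m"] by linarith
  then have "(u / m) powr m \<le> (exp (u / m)) powr m" using assms by (intro powr_mono2) auto
  also have "(exp (u / m)) powr m = exp u" using assms by (simp add: powr_def)
  finally have h: "(u / m) powr m \<le> exp u" .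
  have "exp (- u) = 1 / exp u" by (simp add: exp_minus field_simps)
  also have "\<dots> \<le> 1 / (u / m) powr m" using h assms by (intro divide_left_mono) auto
  also have "1 / (u / m) powr m = m powr m * u powr (- m)"
    using assms by (simp add: powr_divide powr_minus_divide)
  finally show ?thesis .
qed


lemma conv_pointwise:
  fixes x y :: "'a::euclidean_space" and \<sigma> d M :: real
  assumes \<sigma>: "\<sigma> < 0" and m: "\<sigma> + d > 0" and y: "y \<noteq> 0" and M: "M = (\<sigma> + d) powr (\<sigma> + d)"
  defines "s \<equiv> norm y"
  shows "norm x powr \<sigma> * exp (- norm x) * (norm (y - x) powr \<sigma> * exp (- norm (y - x)))
    \<le> exp (- s) * ((s/2) powr \<sigma> * (norm (x - 0) powr \<sigma> * indicator (cball 0 (s/2)) x)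
        + (s/2) powr \<sigma> * (norm (x - y) powr \<sigma> * indicator (cball y (s/2)) x)
        + ((s/2) powr \<sigma> * (s/2) powr \<sigma>) * indicator (cball 0 (2 * s)) x
        + (2 powr (- \<sigma>) * M) * (norm (x - 0) powr (\<sigma> - d) * indicator (- cball 0 (2 * s)) x))"
    (is "?F \<le> exp (- s) * (?T1 + ?T2 + ?T3 + ?T4)")
proof -
  have s: "s > 0" using y by (simp add: s_def)
  have M0: "M \<ge> 0" using M by simp
  have T1: "?T1 \<ge> 0" and T2: "?T2 \<ge> 0" and T3: "?T3 \<ge> 0" and T4: "?T4 \<ge> 0"
    using M0 by auto
  show ?thesis
  proof (cases "x = 0 \<or> x = y")
    case True
    then have "?F = 0" by auto
    moreover have "0 \<le> exp (- s) * (?T1 + ?T2 + ?T3 + ?T4)" using T1 T2 T3 T4 by simp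
    ultimately show ?thesis by linarith
  next
    case False
    define a where "a = norm x"
    define b where "b = norm (y - x)"
    have a: "a > 0" and b: "b > 0" using False by (auto simp: a_def b_def)
    have tri: "s \<le> a + b" unfolding s_def a_def b_def using norm_triangle_ineq[of x "y - x"] by simp
    have tri2: "a - s \<le> b" unfolding s_def a_def b_def using norm_triangle_ineq[of y "x - y"]
      by (simp add: norm_minus_commute)
    have bxy: "norm (x - y) = b" by (simp add: b_def norm_minus_commute)
    have F: "?F = a powr \<sigma> * exp (- a) * (b powr \<sigma> * exp (- b))" by (simp add: a_def b_def)
    consider "a \<le> s / 2" | "\<not> a \<le> s / 2" "b \<le> s / 2" | "\<not> a \<le> s / 2" "\<not> b \<le> s / 2" "a \<le> 2 * s"
      | "2 * s < a" by linarith
    then show ?thesis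
    proof cases
      case 1
      have "?F \<le> exp (- s) * ((s/2) powr \<sigma> * a powr \<sigma>)" unfolding F by (rule L1) (use \<sigma> a b s tri 1 in auto)
      also have "(s/2) powr \<sigma> * a powr \<sigma> = ?T1" using 1 by (simp add: a_def indicator_def dist_norm)
      finally show ?thesis using T2 T3 T4 by (smt (verit) exp_gt_zero mult_left_mono)
    next
      case 2
      have "?F = b powr \<sigma> * exp (- b) * (a powr \<sigma> * exp (- a))" unfolding F by simp
      also have "\<dots> \<le> exp (- s) * ((s/2) powr \<sigma> * b powr \<sigma>)" by (rule L1) (use \<sigma> a b s tri 2 in auto)
      also have "(s/2) powr \<sigma> * b powr \<sigma> = ?T2" using 2 bxy by (simp add: indicator_def dist_norm norm_minus_commute)
      finally show ?thesis using T1 T3 T4 by (smt (verit) exp_gt_zero mult_left_mono)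
    next
      case 3
      have "?F \<le> exp (- s) * ((s/2) powr \<sigma> * (s/2) powr \<sigma>)" unfolding F by (rule L3) (use \<sigma> a b s tri 3 in auto)
      also have "(s/2) powr \<sigma> * (s/2) powr \<sigma> = ?T3" using 3 by (simp add: a_def indicator_def dist_norm)
      finally show ?thesis using T1 T2 T4 by (smt (verit) exp_gt_zero mult_left_mono)
    next
      case 4
      have Mb: "exp (- a) \<le> M * a powr (- (\<sigma> + d))" unfolding M by (rule exp_powr_bound) (use m a in auto)
      have "?F \<le> exp (- s) * (2 powr (- \<sigma>) * M * a powr (\<sigma> - d))" unfolding F
        by (rule L4[OF \<sigma> a b s 4 tri2 refl Mb])
      also have "2 powr (- \<sigma>) * M * a powr (\<sigma> - d) = ?T4" using 4 by (simp add: a_def indicator_def dist_norm)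
      finally show ?thesis using T1 T2 T3 by (smt (verit) exp_gt_zero mult_left_mono)
    qed
  qed
qed


lemma cmult_bound:
  fixes g :: "'a::euclidean_space \<Rightarrow> real"
  assumes c: "0 \<le> c" and g: "(\<lambda>x. ennreal (g x)) \<in> borel_measurable lborel"
    and B: "(\<integral>\<^sup>+x. ennreal (g x) \<partial>lborel) \<le> ennreal B"
  shows "(\<integral>\<^sup>+x. ennreal (c * g x) \<partial>lborel) \<le> ennreal (c * B)"
proof -
  have "(\<integral>\<^sup>+x. ennreal (c * g x) \<partial>lborel) = (\<integral>\<^sup>+x. ennreal c * ennreal (g x) \<partial>lborel)"
    using c by (simp add: ennreal_mult')
  also have "\<dots> = ennreal c * (\<integral>\<^sup>+x. ennreal (g x) \<partial>lborel)"
    using g by (rule nn_integral_cmult)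
  also have "\<dots> \<le> ennreal c * ennreal B" using B by (rule mult_left_mono) simp
  also have "\<dots> = ennreal (c * B)" using c by (simp add: ennreal_mult')
  finally show ?thesis .
qed

lemma ennreal_plus4:
  fixes u1 u2 u3 u4 :: real
  assumes "u1 \<ge> 0" "u2 \<ge> 0" "u3 \<ge> 0" "u4 \<ge> 0"
  shows "ennreal (u1 + u2 + u3 + u4) = ennreal u1 + ennreal u2 + ennreal u3 + ennreal u4"
proof -
  have "ennreal (u1 + u2 + u3 + u4) = ennreal (u1 + u2 + u3) + ennreal u4"
    using assms by (intro ennreal_plus) auto
  also have "ennreal (u1 + u2 + u3) = ennreal (u1 + u2) + ennreal u3"
    using assms by (intro ennreal_plus) auto
  also have "ennreal (u1 + u2) = ennreal u1 + ennreal u2"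
    using assms by (intro ennreal_plus) auto
  finally show ?thesis .
qed

lemma cball_borel[measurable]: "cball (c::'a::euclidean_space) r \<in> sets borel"
  by (rule borel_closed) (rule closed_cball)
lemma cball_borel'[measurable]: "- cball (c::'a::euclidean_space) r \<in> sets borel"
  by (rule borel_comp) (rule cball_borel)

lemma pow_split:
  fixes s \<sigma> \<gamma> d :: real
  assumes "s > 0" "\<sigma> \<le> 0" "2 * \<sigma> + d \<ge> \<sigma>" "2 * \<sigma> + d \<le> \<sigma> + \<gamma> - 1"
  shows "s powr (2 * \<sigma> + d) \<le> s powr \<sigma> + s powr (\<sigma> + \<gamma> - 1)"
proof (cases "s \<le> 1")
  case True
  have "s powr (2 * \<sigma> + d) \<le> s powr \<sigma>" using assms True by (intro powr_mono') auto
  then show ?thesis by (smt (verit) powr_ge_zero)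
next
  case False
  have "s powr (2 * \<sigma> + d) \<le> s powr (\<sigma> + \<gamma> - 1)" using assms False by (intro powr_mono) auto
  then show ?thesis by (smt (verit) powr_ge_zero)
qed

lemma ring4: "E * (C1 * a * S) + E * (C1 * a * S) + E * (b * V * t * S) + E * (A2 * u)
  = E * ((2 * C1 * a + b * V * t) * S + A2 * u)" for E C1 a S b V t A2 u :: real
  by (simp add: algebra_simps)

lemma nn_integral_add4:
  assumes [measurable]: "f1 \<in> borel_measurable M" "f2 \<in> borel_measurable M" "f3 \<in> borel_measurable M" "f4 \<in> borel_measurable M"
  shows "(\<integral>\<^sup>+x. f1 x + f2 x + f3 x + f4 x \<partial>M) = integral\<^sup>N M f1 + integral\<^sup>N M f2 + integral\<^sup>N M f3 + integral\<^sup>N M f4"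
proof -
  have "(\<integral>\<^sup>+x. f1 x + f2 x + f3 x + f4 x \<partial>M) = (\<integral>\<^sup>+x. f1 x + f2 x + f3 x \<partial>M) + integral\<^sup>N M f4"
    by (rule nn_integral_add; measurable)
  also have "(\<integral>\<^sup>+x. f1 x + f2 x + f3 x \<partial>M) = (\<integral>\<^sup>+x. f1 x + f2 x \<partial>M) + integral\<^sup>N M f3"
    by (rule nn_integral_add; measurable)
  also have "(\<integral>\<^sup>+x. f1 x + f2 x \<partial>M) = integral\<^sup>N M f1 + integral\<^sup>N M f2"
    by (rule nn_integral_add; measurable)
  finally show ?thesis .
qed

lemma conv_bound:
  fixes \<sigma> \<gamma> :: real
  assumes \<sigma>: "\<sigma> < 0" and m: "\<sigma> + DIM('a) > 0" and g: "\<sigma> + DIM('a) \<le> \<gamma> - 1"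
  shows "\<exists>K>0. \<forall>y::'a::euclidean_space. y \<noteq> 0 \<longrightarrow>
    (\<integral>\<^sup>+x. ennreal (norm x powr \<sigma> * exp (- norm x) * (norm (y - x) powr \<sigma> * exp (- norm (y - x)))) \<partial>lborel)
      \<le> ennreal (K * exp (- norm y) * (norm y powr \<sigma> + norm y powr (\<sigma> + \<gamma> - 1)))"
proof -
  define d where "d = real DIM('a)"
  obtain C1 where C1: "C1 \<ge> 0" "\<And>(c::'a) R. R > 0 \<Longrightarrow>
     (\<integral>\<^sup>+x. ennreal (norm (x - c) powr \<sigma> * indicator (cball c R) x) \<partial>lborel) \<le> ennreal (C1 * R powr (\<sigma> + d))"
    using ball_integral[OF \<sigma> m] unfolding d_def by blast
  obtain C2 where C2: "C2 \<ge> 0" "\<And>(c::'a) R. R > 0 \<Longrightarrow>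
     (\<integral>\<^sup>+x. ennreal (norm (x - c) powr (\<sigma> - d) * indicator (- cball c R) x) \<partial>lborel) \<le> ennreal (C2 * R powr \<sigma>)"
    using tail_integral[where 'a='a, of "\<sigma> - DIM('a)"] \<sigma> unfolding d_def by auto
  define M where "M = (\<sigma> + d) powr (\<sigma> + d)"
  define V where "V = unit_ball_vol d"
  have V: "V \<ge> 0" unfolding V_def by (rule unit_ball_vol_nonneg) (simp add: d_def)
  have M0: "M \<ge> 0" unfolding M_def by simp
  define A1 where "A1 = 2 * C1 * (1/2) powr (2 * \<sigma> + d) + (1/2) powr (2 * \<sigma>) * V * 2 ^ DIM('a)"
  define A2 where "A2 = M * C2"
  have A1: "A1 \<ge> 0" unfolding A1_def using C1 V by simp
  have A2: "A2 \<ge> 0" unfolding A2_def using C2 M0 by simp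
  define K where "K = A1 + A2 + 1"
  show ?thesis
  proof (intro exI[of _ K] conjI allI impI)
    show "K > 0" unfolding K_def using A1 A2 by simp
    fix y :: 'a assume y: "y \<noteq> 0"
    define s where "s = norm y"
    have s: "s > 0" using y by (simp add: s_def)
    define E where "E = exp (- s)"
    have E: "E > 0" by (simp add: E_def)
    define h where "h = s / 2"
    have h: "h > 0" using s by (simp add: h_def)
    define c1 where "c1 = h powr \<sigma>"
    define c3 where "c3 = h powr \<sigma> * h powr \<sigma>"
    define c4 where "c4 = 2 powr (- \<sigma>) * M"
    define g1 where "g1 x = norm (x - 0) powr \<sigma> * indicator (cball 0 h) x" for x :: 'a
    define g2 where "g2 x = norm (x - y) powr \<sigma> * indicator (cball y h) x" for x :: 'a
    define g3 where "g3 x = (indicator (cball 0 (2 * s)) x :: real)" for x :: 'a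
    define g4 where "g4 x = norm (x - 0) powr (\<sigma> - d) * indicator (- cball 0 (2 * s)) x" for x :: 'a
    have mg: "(\<lambda>x. ennreal (g1 x)) \<in> borel_measurable lborel"
      "(\<lambda>x. ennreal (g2 x)) \<in> borel_measurable lborel"
      "(\<lambda>x. ennreal (g3 x)) \<in> borel_measurable lborel"
      "(\<lambda>x. ennreal (g4 x)) \<in> borel_measurable lborel"
      unfolding g1_def g2_def g3_def g4_def by measurable
    have mcg: "(\<lambda>x. ennreal (c * g1 x)) \<in> borel_measurable lborel"
      "(\<lambda>x. ennreal (c * g2 x)) \<in> borel_measurable lborel"
      "(\<lambda>x. ennreal (c * g3 x)) \<in> borel_measurable lborel"
      "(\<lambda>x. ennreal (c * g4 x)) \<in> borel_measurable lborel" for c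
      unfolding g1_def g2_def g3_def g4_def by measurable
    have pt: "ennreal (norm x powr \<sigma> * exp (- norm x) * (norm (y - x) powr \<sigma> * exp (- norm (y - x))))
      \<le> ennreal (E * c1 * g1 x) + ennreal (E * c1 * g2 x) + ennreal (E * c3 * g3 x) + ennreal (E * c4 * g4 x)" for x
    proof -
      have "norm x powr \<sigma> * exp (- norm x) * (norm (y - x) powr \<sigma> * exp (- norm (y - x)))
         \<le> E * (c1 * g1 x + c1 * g2 x + c3 * g3 x + c4 * g4 x)"
        unfolding E_def c1_def c3_def c4_def g1_def g2_def g3_def g4_def h_def s_def
        by (rule conv_pointwise[OF \<sigma> _ y M_def]) (use m in \<open>simp add: d_def\<close>)
      also have "\<dots> = E * c1 * g1 x + E * c1 * g2 x + E * c3 * g3 x + E * c4 * g4 x"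
        by (simp add: algebra_simps)
      finally have "ennreal (norm x powr \<sigma> * exp (- norm x) * (norm (y - x) powr \<sigma> * exp (- norm (y - x))))
         \<le> ennreal (E * c1 * g1 x + E * c1 * g2 x + E * c3 * g3 x + E * c4 * g4 x)"
        by (rule ennreal_leI)
      also have "\<dots> = ennreal (E * c1 * g1 x) + ennreal (E * c1 * g2 x) + ennreal (E * c3 * g3 x) + ennreal (E * c4 * g4 x)"
        using E M0 by (intro ennreal_plus4) (auto simp: c1_def c3_def c4_def g1_def g2_def g3_def g4_def)
      finally show ?thesis .
    qed
    have I1: "(\<integral>\<^sup>+x. ennreal (E * c1 * g1 x) \<partial>lborel) \<le> ennreal (E * c1 * (C1 * h powr (\<sigma> + d)))"
      by (rule cmult_bound[OF _ mg(1)]) (use E h C1(2)[of h 0] in \<open>simp_all add: c1_def g1_def\<close>)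
    have I2: "(\<integral>\<^sup>+x. ennreal (E * c1 * g2 x) \<partial>lborel) \<le> ennreal (E * c1 * (C1 * h powr (\<sigma> + d)))"
      by (rule cmult_bound[OF _ mg(2)]) (use E h C1(2)[of h y] in \<open>simp_all add: c1_def g2_def\<close>)
    have I3: "(\<integral>\<^sup>+x. ennreal (E * c3 * g3 x) \<partial>lborel) \<le> ennreal (E * c3 * (V * (2 * s) ^ DIM('a)))"
    proof (rule cmult_bound[OF _ mg(3)])
      have "(\<integral>\<^sup>+x. ennreal (g3 x) \<partial>lborel) = emeasure lborel (cball (0::'a) (2 * s))"
        unfolding g3_def by (simp add: ennreal_indicator nn_integral_indicator)
      also have "\<dots> = ennreal (V * (2 * s) ^ DIM('a))" using s by (simp add: emeasure_cball V_def d_def)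
      finally show "(\<integral>\<^sup>+x. ennreal (g3 x) \<partial>lborel) \<le> ennreal (V * (2 * s) ^ DIM('a))" by simp
    qed (use E in \<open>simp add: c3_def\<close>)
    have I4: "(\<integral>\<^sup>+x. ennreal (E * c4 * g4 x) \<partial>lborel) \<le> ennreal (E * c4 * (C2 * (2 * s) powr \<sigma>))"
      by (rule cmult_bound[OF _ mg(4)]) (use E s M0 C2(2)[of "2 * s" 0] in \<open>simp_all add: c4_def g4_def\<close>)
    have "(\<integral>\<^sup>+x. ennreal (norm x powr \<sigma> * exp (- norm x) * (norm (y - x) powr \<sigma> * exp (- norm (y - x)))) \<partial>lborel)
       \<le> (\<integral>\<^sup>+x. ennreal (E * c1 * g1 x) + ennreal (E * c1 * g2 x) + ennreal (E * c3 * g3 x) + ennreal (E * c4 * g4 x) \<partial>lborel)"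
      by (intro nn_integral_mono pt)
    also have "\<dots> = (\<integral>\<^sup>+x. ennreal (E * c1 * g1 x) \<partial>lborel) + (\<integral>\<^sup>+x. ennreal (E * c1 * g2 x) \<partial>lborel)
        + (\<integral>\<^sup>+x. ennreal (E * c3 * g3 x) \<partial>lborel) + (\<integral>\<^sup>+x. ennreal (E * c4 * g4 x) \<partial>lborel)"
      by (rule nn_integral_add4[OF mcg])
    also have "\<dots> \<le> ennreal (E * c1 * (C1 * h powr (\<sigma> + d))) + ennreal (E * c1 * (C1 * h powr (\<sigma> + d)))
        + ennreal (E * c3 * (V * (2 * s) ^ DIM('a))) + ennreal (E * c4 * (C2 * (2 * s) powr \<sigma>))"
      by (intro add_mono I1 I2 I3 I4)
    also have "\<dots> = ennreal (E * c1 * (C1 * h powr (\<sigma> + d)) + E * c1 * (C1 * h powr (\<sigma> + d))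
        + E * c3 * (V * (2 * s) ^ DIM('a)) + E * c4 * (C2 * (2 * s) powr \<sigma>))"
      using E h s C1 C2 V M0 by (intro ennreal_plus4[symmetric]) (auto simp: c1_def c3_def c4_def)
    also have "\<dots> \<le> ennreal (K * exp (- norm y) * (norm y powr \<sigma> + norm y powr (\<sigma> + \<gamma> - 1)))"
    proof (rule ennreal_leI)
      have e1: "c1 * (C1 * h powr (\<sigma> + d)) = C1 * (1/2) powr (2 * \<sigma> + d) * s powr (2 * \<sigma> + d)"
      proof -
        have "h powr \<sigma> * h powr (\<sigma> + d) = h powr (2 * \<sigma> + d)"
          by (simp add: powr_add[symmetric])
        also have "\<dots> = (s * (1/2)) powr (2 * \<sigma> + d)" by (simp add: h_def)
        also have "\<dots> = s powr (2 * \<sigma> + d) * (1/2) powr (2 * \<sigma> + d)" by (rule powr_mult)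
        finally have hh: "h powr \<sigma> * h powr (\<sigma> + d) = s powr (2 * \<sigma> + d) * (1/2) powr (2 * \<sigma> + d)" .
        have "c1 * (C1 * h powr (\<sigma> + d)) = C1 * (h powr \<sigma> * h powr (\<sigma> + d))"
          by (simp only: c1_def mult_ac)
        also have "\<dots> = C1 * (1/2) powr (2 * \<sigma> + d) * s powr (2 * \<sigma> + d)"
          by (simp only: hh mult_ac)
        finally show ?thesis .
      qed
      have e3: "c3 * (V * (2 * s) ^ DIM('a)) = (1/2) powr (2 * \<sigma>) * V * 2 ^ DIM('a) * s powr (2 * \<sigma> + d)"
      proof -
        have "(2 * s) ^ DIM('a) = 2 ^ DIM('a) * s powr d" using s by (simp add: d_def powr_realpow power_mult_distrib)
        moreover have "c3 = (1/2) powr (2 * \<sigma>) * s powr (2 * \<sigma>)"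
        proof -
          have "h powr \<sigma> * h powr \<sigma> = h powr (2 * \<sigma>)"
            by (simp add: powr_add[symmetric])
          also have "\<dots> = (s * (1/2)) powr (2 * \<sigma>)" by (simp add: h_def)
          also have "\<dots> = s powr (2 * \<sigma>) * (1/2) powr (2 * \<sigma>)" by (rule powr_mult)
          finally show ?thesis unfolding c3_def by (simp only: mult_ac)
        qed
        moreover have "s powr (2 * \<sigma>) * s powr d = s powr (2 * \<sigma> + d)" by (simp add: powr_add)
        ultimately show ?thesis by (simp add: algebra_simps)
      qed
      have e4: "c4 * (C2 * (2 * s) powr \<sigma>) = A2 * s powr \<sigma>"
      proof -
        have "(2 * s) powr \<sigma> = 2 powr \<sigma> * s powr \<sigma>" by (simp add: powr_mult)
        moreover have "2 powr (- \<sigma>) * 2 powr \<sigma> = (1::real)" by (simp add: powr_add[symmetric])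
        ultimately show ?thesis unfolding c4_def A2_def by (simp add: algebra_simps)
      qed
      have sum: "E * c1 * (C1 * h powr (\<sigma> + d)) + E * c1 * (C1 * h powr (\<sigma> + d))
        + E * c3 * (V * (2 * s) ^ DIM('a)) + E * c4 * (C2 * (2 * s) powr \<sigma>)
        = E * (A1 * s powr (2 * \<sigma> + d) + A2 * s powr \<sigma>)"
      proof -
        have "E * c1 * (C1 * h powr (\<sigma> + d)) + E * c1 * (C1 * h powr (\<sigma> + d))
          + E * c3 * (V * (2 * s) ^ DIM('a)) + E * c4 * (C2 * (2 * s) powr \<sigma>)
          = E * (c1 * (C1 * h powr (\<sigma> + d))) + E * (c1 * (C1 * h powr (\<sigma> + d)))
          + E * (c3 * (V * (2 * s) ^ DIM('a))) + E * (c4 * (C2 * (2 * s) powr \<sigma>))"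
          by (simp only: mult.assoc)
        also have "\<dots> = E * (C1 * (1/2) powr (2 * \<sigma> + d) * s powr (2 * \<sigma> + d))
          + E * (C1 * (1/2) powr (2 * \<sigma> + d) * s powr (2 * \<sigma> + d))
          + E * ((1/2) powr (2 * \<sigma>) * V * 2 ^ DIM('a) * s powr (2 * \<sigma> + d)) + E * (A2 * s powr \<sigma>)"
          by (simp only: e1 e3 e4)
        also have "\<dots> = E * (A1 * s powr (2 * \<sigma> + d) + A2 * s powr \<sigma>)"
          unfolding A1_def by (rule ring4)
        finally show ?thesis .
      qed
      have ps: "s powr (2 * \<sigma> + d) \<le> s powr \<sigma> + s powr (\<sigma> + \<gamma> - 1)"
        by (rule pow_split) (use s \<sigma> m g in \<open>auto simp: d_def\<close>)
      have "A1 * s powr (2 * \<sigma> + d) + A2 * s powr \<sigma> \<le> A1 * (s powr \<sigma> + s powr (\<sigma> + \<gamma> - 1)) + A2 * (s powr \<sigma> + s powr (\<sigma> + \<gamma> - 1))"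
        using ps A1 A2 by (intro add_mono mult_left_mono) auto
      also have "\<dots> \<le> K * (s powr \<sigma> + s powr (\<sigma> + \<gamma> - 1))"
        unfolding K_def by (simp add: algebra_simps)
      finally have fin: "E * (A1 * s powr (2 * \<sigma> + d) + A2 * s powr \<sigma>) \<le> E * (K * (s powr \<sigma> + s powr (\<sigma> + \<gamma> - 1)))"
        using E by (intro mult_left_mono) auto
      have r: "K * exp (- norm y) * (norm y powr \<sigma> + norm y powr (\<sigma> + \<gamma> - 1)) = E * (K * (s powr \<sigma> + s powr (\<sigma> + \<gamma> - 1)))"
        unfolding E_def s_def by (simp only: mult_ac)
      show "E * c1 * (C1 * h powr (\<sigma> + d)) + E * c1 * (C1 * h powr (\<sigma> + d))
        + E * c3 * (V * (2 * s) ^ DIM('a)) + E * c4 * (C2 * (2 * s) powr \<sigma>)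
        \<le> K * exp (- norm y) * (norm y powr \<sigma> + norm y powr (\<sigma> + \<gamma> - 1))"
        unfolding sum r by (rule fin)
    qed
    finally show "(\<integral>\<^sup>+x. ennreal (norm x powr \<sigma> * exp (- norm x) * (norm (y - x) powr \<sigma> * exp (- norm (y - x)))) \<partial>lborel)
      \<le> ennreal (K * exp (- norm y) * (norm y powr \<sigma> + norm y powr (\<sigma> + \<gamma> - 1)))" .
  qed
qed



lemma norm_integral_le_nn:
  fixes f :: "'a \<Rightarrow> real"
  shows "ennreal (norm (integral\<^sup>L M f)) \<le> (\<integral>\<^sup>+x. ennreal (norm (f x)) \<partial>M)"
proof (cases "integrable M f")
  case True
  then show ?thesis using integral_norm_bound_ennreal[OF True] by simp
next
  case False
  then show ?thesis by (simp add: not_integrable_integral_eq)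
qed

lemma inner_bound:
  fixes \<psi> :: "'a::euclidean_space \<Rightarrow> real" and y :: 'a
  assumes k: "k \<ge> 0" and B: "B \<ge> 0"
    and \<psi>b: "\<And>x. x \<noteq> 0 \<Longrightarrow> \<bar>\<psi> x\<bar> \<le> k * (norm x powr \<sigma> * exp (- norm x))"
    and w: "\<And>x. \<bar>w x\<bar> \<le> 1"
    and Kb: "(\<integral>\<^sup>+x. ennreal (norm x powr \<sigma> * exp (- norm x) * (norm (y - x) powr \<sigma> * exp (- norm (y - x)))) \<partial>lborel) \<le> ennreal B"
  shows "\<bar>\<integral>x. \<psi> x * \<psi> (y - x) * w x \<partial>lborel\<bar> \<le> k^2 * B"
proof -
  have "ennreal \<bar>\<integral>x. \<psi> x * \<psi> (y - x) * w x \<partial>lborel\<bar> \<le> (\<integral>\<^sup>+x. ennreal (norm (\<psi> x * \<psi> (y - x) * w x)) \<partial>lborel)"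
    using norm_integral_le_nn[of lborel "\<lambda>x. \<psi> x * \<psi> (y - x) * w x"] by simp
  also have "\<dots> \<le> (\<integral>\<^sup>+x. ennreal (k^2 * (norm x powr \<sigma> * exp (- norm x) * (norm (y - x) powr \<sigma> * exp (- norm (y - x))))) \<partial>lborel)"
  proof (rule nn_integral_mono_AE)
    show "AE x in lborel. ennreal (norm (\<psi> x * \<psi> (y - x) * w x))
       \<le> ennreal (k^2 * (norm x powr \<sigma> * exp (- norm x) * (norm (y - x) powr \<sigma> * exp (- norm (y - x)))))"
      using AE_lborel_singleton[of 0] AE_lborel_singleton[of y]
    proof eventually_elim
      case (elim x)
      have 1: "\<bar>\<psi> x\<bar> \<le> k * (norm x powr \<sigma> * exp (- norm x))" using elim \<psi>b by auto
      have 2: "\<bar>\<psi> (y - x)\<bar> \<le> k * (norm (y - x) powr \<sigma> * exp (- norm (y - x)))" using elim \<psi>b by auto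
      have "norm (\<psi> x * \<psi> (y - x) * w x) = \<bar>\<psi> x\<bar> * \<bar>\<psi> (y - x)\<bar> * \<bar>w x\<bar>" by (simp add: abs_mult)
      also have "\<dots> \<le> \<bar>\<psi> x\<bar> * \<bar>\<psi> (y - x)\<bar> * 1" by (rule mult_left_mono[OF w]) simp
      also have "\<dots> \<le> (k * (norm x powr \<sigma> * exp (- norm x))) * (k * (norm (y - x) powr \<sigma> * exp (- norm (y - x))))"
        using 1 2 by (simp add: mult_mono)
      also have "\<dots> = k^2 * (norm x powr \<sigma> * exp (- norm x) * (norm (y - x) powr \<sigma> * exp (- norm (y - x))))"
        by (simp add: power2_eq_square algebra_simps)
      finally show ?case by (rule ennreal_leI)
    qed
  qed
  also have "\<dots> = ennreal (k^2) * (\<integral>\<^sup>+x. ennreal (norm x powr \<sigma> * exp (- norm x) * (norm (y - x) powr \<sigma> * exp (- norm (y - x)))) \<partial>lborel)"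
    using k by (simp add: ennreal_mult' nn_integral_cmult)
  also have "\<dots> \<le> ennreal (k^2) * ennreal B" using Kb by (rule mult_left_mono) simp
  also have "\<dots> = ennreal (k^2 * B)" using k by (simp add: ennreal_mult')
  finally show ?thesis using k B by (simp add: ennreal_le_iff)
qed

lemma ftc_g:
  fixes r \<gamma> a T :: real
  assumes r: "r > 0" and T: "T \<ge> 1"
    and \<phi>: "\<phi> = (\<lambda>t. r powr \<gamma> - r powr \<gamma> * t powr \<gamma> - t * r)"
    and g: "g = (\<lambda>t. t powr a * exp (\<phi> t))"
    and q: "q = (\<lambda>t. - a * t powr (a - 1) * exp (\<phi> t) + t powr a * exp (\<phi> t) * (r powr \<gamma> * (\<gamma> * t powr (\<gamma> - 1)) + r))"
  shows "continuous_on {1..T} q" "(LBINT t=1..T. q t) = g 1 - g T"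
proof -
  show cq: "continuous_on {1..T} q" unfolding q \<phi> by (auto intro!: continuous_intros)
  have D: "((\<lambda>t. - g t) has_real_derivative q t) (at t)" if t: "t > 0" for t
  proof -
    have d1: "((\<lambda>t. t powr a) has_real_derivative a * t powr (a - 1)) (at t)" by (rule has_real_derivative_powr[OF t])
    have d2: "((\<lambda>t. t powr \<gamma>) has_real_derivative \<gamma> * t powr (\<gamma> - 1)) (at t)" by (rule has_real_derivative_powr[OF t])
    have d3: "(\<phi> has_real_derivative (0 - r powr \<gamma> * (\<gamma> * t powr (\<gamma> - 1)) - 1 * r)) (at t)"
      unfolding \<phi> by (intro DERIV_diff DERIV_cmult DERIV_const d2 DERIV_cmult_right DERIV_ident)
    have d4: "((\<lambda>t. exp (\<phi> t)) has_real_derivative exp (\<phi> t) * (0 - r powr \<gamma> * (\<gamma> * t powr (\<gamma> - 1)) - 1 * r)) (at t)"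
      by (rule DERIV_fun_exp[OF d3])
    have d5: "((\<lambda>t. t powr a * exp (\<phi> t)) has_real_derivative
       a * t powr (a - 1) * exp (\<phi> t) + exp (\<phi> t) * (0 - r powr \<gamma> * (\<gamma> * t powr (\<gamma> - 1)) - 1 * r) * t powr a) (at t)"
      by (rule DERIV_mult[OF d1 d4])
    have d6: "((\<lambda>t. - (t powr a * exp (\<phi> t))) has_real_derivative
       - (a * t powr (a - 1) * exp (\<phi> t) + exp (\<phi> t) * (0 - r powr \<gamma> * (\<gamma> * t powr (\<gamma> - 1)) - 1 * r) * t powr a)) (at t)"
      by (rule DERIV_minus[OF d5])
    have eq: "- (a * t powr (a - 1) * exp (\<phi> t) + exp (\<phi> t) * (0 - r powr \<gamma> * (\<gamma> * t powr (\<gamma> - 1)) - 1 * r) * t powr a) = q t"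
      unfolding q by (simp add: algebra_simps)
    show ?thesis using d6 unfolding eq g by simp
  qed
  have "(LBINT t=1..T. q t) = (- g T) - (- g 1)"
  proof (subst one_ereal_def, rule interval_integral_FTC_finite)
    have mm: "min 1 T = 1" "max 1 T = T" using T by auto
    show "continuous_on {min 1 T..max 1 T} q" unfolding mm by (rule cq)
    fix t assume "min 1 T \<le> t" "t \<le> max 1 T"
    then have t0: "t > 0" using T by simp
    have "((\<lambda>t. - g t) has_vector_derivative q t) (at t)"
      using D[OF t0] by (simp only: has_real_derivative_iff_has_vector_derivative)
    then show "((\<lambda>t. - g t) has_vector_derivative q t) (at t within {min 1 T..max 1 T})"
      by (rule has_vector_derivative_at_within)
  qed
  then show "(LBINT t=1..T. q t) = g 1 - g T" by simp
qed


lemma pw: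
  fixes r t \<gamma> \<sigma> c k K P I a :: real
  assumes r: "r > 0" and t: "t \<ge> 1" and \<gamma>: "\<gamma> > 0" and k: "k > 0" and K: "K \<ge> 0"
    and kK1: "\<gamma> * k * K \<le> 1" and kK2: "k * K \<le> 1" and a: "a = \<sigma> - c" "\<sigma> \<le> c"
    and P: "\<bar>P\<bar> \<le> 1"
    and I: "\<bar>I\<bar> \<le> k^2 * (K * exp (- (t * r)) * ((t * r) powr \<sigma> + (t * r) powr (\<sigma> + \<gamma> - 1)))"
  shows "\<bar>exp (r powr \<gamma> * (1 - t powr \<gamma>)) * r * P / t powr c * I\<bar>
    \<le> k * r powr \<sigma> / \<gamma> * (- a * t powr (a - 1) * exp (r powr \<gamma> - r powr \<gamma> * t powr \<gamma> - t * r)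
        + t powr a * exp (r powr \<gamma> - r powr \<gamma> * t powr \<gamma> - t * r) * (r powr \<gamma> * (\<gamma> * t powr (\<gamma> - 1)) + r))"
proof -
  define u where "u = t * r"
  have t0: "t > 0" using t by simp
  have u: "u > 0" using r t0 by (simp add: u_def)
  define Y where "Y = exp (r powr \<gamma> * (1 - t powr \<gamma>))"
  have Y: "Y > 0" by (simp add: Y_def)
  define X where "X = Y * exp (- u) / t powr c"
  have X: "X > 0" using Y t0 by (simp add: X_def)
  have ephi: "exp (r powr \<gamma> - r powr \<gamma> * t powr \<gamma> - t * r) = Y * exp (- u)"
    unfolding Y_def u_def by (simp add: exp_add[symmetric] algebra_simps)
  define S where "S = u powr \<sigma> + u powr (\<sigma> + \<gamma> - 1)"
  have S: "S \<ge> 0" by (simp add: S_def)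
  have "\<bar>exp (r powr \<gamma> * (1 - t powr \<gamma>)) * r * P / t powr c * I\<bar> = Y * r * \<bar>P\<bar> / t powr c * \<bar>I\<bar>"
    using r t0 by (simp add: Y_def abs_mult)
  also have "\<dots> \<le> Y * r * 1 / t powr c * (k^2 * (K * exp (- u) * S))"
    using P I Y r t0 by (intro mult_mono divide_right_mono mult_left_mono) (auto simp: u_def S_def)
  also have "\<dots> = X * r * (k^2 * K * S)" by (simp add: X_def)
  finally have L: "\<bar>exp (r powr \<gamma> * (1 - t powr \<gamma>)) * r * P / t powr c * I\<bar> \<le> X * r * (k^2 * K * S)" .
  have first: "0 \<le> - a * t powr (a - 1) * exp (r powr \<gamma> - r powr \<gamma> * t powr \<gamma> - t * r)"
    using a by simp
  have ta: "t powr a = t powr \<sigma> / t powr c" using a t0 by (simp add: powr_diff)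
  have h1: "r powr \<sigma> * t powr \<sigma> * (r powr \<gamma> * t powr (\<gamma> - 1)) = r * u powr (\<sigma> + \<gamma> - 1)"
  proof -
    have A: "u powr (\<sigma> + \<gamma> - 1) = t powr (\<sigma> + \<gamma> - 1) * r powr (\<sigma> + \<gamma> - 1)" by (simp add: u_def powr_mult)
    have B: "t powr \<sigma> * t powr (\<gamma> - 1) = t powr (\<sigma> + \<gamma> - 1)" by (simp add: powr_add[symmetric] add_diff_eq)
    have C: "r powr \<sigma> * r powr \<gamma> = r * r powr (\<sigma> + \<gamma> - 1)"
    proof -
      have "r powr \<sigma> * r powr \<gamma> = r powr (\<sigma> + \<gamma>)" by (simp add: powr_add[symmetric])
      also have "\<sigma> + \<gamma> = 1 + (\<sigma> + \<gamma> - 1)" by simp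
      also have "r powr (1 + (\<sigma> + \<gamma> - 1)) = r powr 1 * r powr (\<sigma> + \<gamma> - 1)" by (rule powr_add)
      also have "r powr 1 = r" using r by simp
      finally show ?thesis .
    qed
    have "r powr \<sigma> * t powr \<sigma> * (r powr \<gamma> * t powr (\<gamma> - 1))
       = (r powr \<sigma> * r powr \<gamma>) * (t powr \<sigma> * t powr (\<gamma> - 1))" by (simp only: mult_ac)
    also have "\<dots> = (r * r powr (\<sigma> + \<gamma> - 1)) * t powr (\<sigma> + \<gamma> - 1)" by (simp only: B C)
    also have "\<dots> = r * u powr (\<sigma> + \<gamma> - 1)" by (simp only: A mult_ac)
    finally show ?thesis .
  qed
  have h2: "r powr \<sigma> * t powr \<sigma> * r = r * u powr \<sigma>" by (simp add: u_def powr_mult)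
  have R: "k * r powr \<sigma> / \<gamma> * (t powr a * exp (r powr \<gamma> - r powr \<gamma> * t powr \<gamma> - t * r) * (r powr \<gamma> * (\<gamma> * t powr (\<gamma> - 1)) + r))
     = X * r * (k / \<gamma> * (\<gamma> * u powr (\<sigma> + \<gamma> - 1) + u powr \<sigma>))"
  proof -
    have "k * r powr \<sigma> / \<gamma> * (t powr a * exp (r powr \<gamma> - r powr \<gamma> * t powr \<gamma> - t * r) * (r powr \<gamma> * (\<gamma> * t powr (\<gamma> - 1)) + r))
      = X * (k / \<gamma>) * (\<gamma> * (r powr \<sigma> * t powr \<sigma> * (r powr \<gamma> * t powr (\<gamma> - 1))) + r powr \<sigma> * t powr \<sigma> * r)"
      using \<gamma> t0 unfolding ta ephi X_def by (simp add: field_simps)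
    also have "\<dots> = X * r * (k / \<gamma> * (\<gamma> * u powr (\<sigma> + \<gamma> - 1) + u powr \<sigma>))"
      unfolding h1 h2 by (simp add: algebra_simps)
    finally show ?thesis .
  qed
  have key: "k^2 * K * S \<le> k / \<gamma> * (\<gamma> * u powr (\<sigma> + \<gamma> - 1) + u powr \<sigma>)"
  proof -
    have e1: "k^2 * K * u powr \<sigma> \<le> k / \<gamma> * u powr \<sigma>"
    proof -
      have "k^2 * K * u powr \<sigma> = (k / \<gamma>) * (\<gamma> * k * K) * u powr \<sigma>" using \<gamma> by (simp add: power2_eq_square)
      also have "\<dots> \<le> (k / \<gamma>) * 1 * u powr \<sigma>" using kK1 k \<gamma> by (intro mult_right_mono mult_left_mono) auto
      finally show ?thesis by simp
    qed
    have e2: "k^2 * K * u powr (\<sigma> + \<gamma> - 1) \<le> k * u powr (\<sigma> + \<gamma> - 1)"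
    proof -
      have "k^2 * K * u powr (\<sigma> + \<gamma> - 1) = k * (k * K) * u powr (\<sigma> + \<gamma> - 1)" by (simp add: power2_eq_square)
      also have "\<dots> \<le> k * 1 * u powr (\<sigma> + \<gamma> - 1)" using kK2 k by (intro mult_right_mono mult_left_mono) auto
      finally show ?thesis by simp
    qed
    have "k / \<gamma> * (\<gamma> * u powr (\<sigma> + \<gamma> - 1) + u powr \<sigma>) = k * u powr (\<sigma> + \<gamma> - 1) + k / \<gamma> * u powr \<sigma>"
      using \<gamma> by (simp add: algebra_simps)
    then show ?thesis using e1 e2 unfolding S_def by (simp add: algebra_simps)
  qed
  have "X * r * (k^2 * K * S) \<le> X * r * (k / \<gamma> * (\<gamma> * u powr (\<sigma> + \<gamma> - 1) + u powr \<sigma>))"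
    using key X r by (intro mult_left_mono) auto
  also have "\<dots> = k * r powr \<sigma> / \<gamma> * (t powr a * exp (r powr \<gamma> - r powr \<gamma> * t powr \<gamma> - t * r) * (r powr \<gamma> * (\<gamma> * t powr (\<gamma> - 1)) + r))"
    by (rule R[symmetric])
  also have "\<dots> \<le> k * r powr \<sigma> / \<gamma> * (- a * t powr (a - 1) * exp (r powr \<gamma> - r powr \<gamma> * t powr \<gamma> - t * r)
        + t powr a * exp (r powr \<gamma> - r powr \<gamma> * t powr \<gamma> - t * r) * (r powr \<gamma> * (\<gamma> * t powr (\<gamma> - 1)) + r))"
    using first k \<gamma> by (intro mult_left_mono) auto
  finally show ?thesis using L by linarith
qed



lemma abs_prod_sin_le1: "\<bar>\<Prod>k\<in>A. sin (f k)\<bar> \<le> (1::real)"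
proof -
  have "\<bar>\<Prod>k\<in>A. sin (f k)\<bar> = (\<Prod>k\<in>A. \<bar>sin (f k)\<bar>)" by (simp add: abs_prod)
  also have "\<dots> \<le> 1" by (intro prod_le_1) auto
  finally show ?thesis .
qed

lemma main_bound:
  fixes \<psi> :: "real^'n::finite \<Rightarrow> real" and \<eta> :: "real^'n" and e :: "nat \<Rightarrow> 'n"
  assumes \<gamma>: "\<gamma> > 0" and \<sigma>: "\<sigma> < 0" and cle: "\<sigma> \<le> \<gamma> - real CARD('n) - 1"
    and \<beta>: "0 < \<beta>" "\<beta> < 1" and k: "k > 0" and K: "K \<ge> 0" and kK1: "\<gamma> * k * K \<le> 1" and kK2: "k * K \<le> 1"
    and \<psi>b: "\<And>\<eta>. \<eta> \<noteq> 0 \<Longrightarrow> \<bar>\<psi> \<eta>\<bar> < k * norm \<eta> powr \<sigma> * exp (- 1 * norm \<eta>)"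
    and Kb: "\<And>y::real^'n. y \<noteq> 0 \<Longrightarrow> (\<integral>\<^sup>+x. ennreal (norm x powr \<sigma> * exp (- norm x) * (norm (y - x) powr \<sigma> * exp (- norm (y - x)))) \<partial>lborel)
       \<le> ennreal (K * exp (- norm y) * (norm y powr \<sigma> + norm y powr (\<sigma> + \<gamma> - 1)))"
    and \<eta>: "\<eta> \<noteq> 0"
  shows "\<bar>renorm_op e \<gamma> \<beta> \<psi> \<eta>\<bar> < k * norm \<eta> powr \<sigma> * exp (- 1 * norm \<eta>)"
proof -
  define cc where "cc = \<gamma> - real CARD('n) - 1"
  define r where "r = norm \<eta>"
  have r: "r > 0" using \<eta> by (simp add: r_def)
  define T where "T = 1 / \<beta>"
  have T: "T > 1" using \<beta> by (simp add: T_def)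
  define a where "a = \<sigma> - cc"
  have a: "a \<le> 0" using cle by (simp add: a_def cc_def)
  define \<phi> where "\<phi> = (\<lambda>t. r powr \<gamma> - r powr \<gamma> * t powr \<gamma> - t * r)"
  define g where "g = (\<lambda>t. t powr a * exp (\<phi> t))"
  define q where "q = (\<lambda>t. - a * t powr (a - 1) * exp (\<phi> t) + t powr a * exp (\<phi> t) * (r powr \<gamma> * (\<gamma> * t powr (\<gamma> - 1)) + r))"
  have cq: "continuous_on {1..T} q" and ftc: "(LBINT t=1..T. q t) = g 1 - g T"
    using ftc_g[OF r _ \<phi>_def g_def q_def, of T] T by auto
  have qnn: "q t \<ge> 0" if "t > 0" for t
    unfolding q_def using a that r \<gamma> by (intro add_nonneg_nonneg mult_nonneg_nonneg) auto
  define P where "P = (\<Prod>k\<in>{1..CARD('n) - 2}. sin (polar_angle e \<eta> k))"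
  have P: "\<bar>P\<bar> \<le> 1" unfolding P_def by (rule abs_prod_sin_le1)
  define Iw where "Iw = (\<lambda>t. \<integral>x. \<psi> x * \<psi> (t *\<^sub>R \<eta> - x)
                 * cos (azimuthal_angle e x - azimuthal_angle e \<eta>)
                 * sin (azimuthal_angle e (t *\<^sub>R \<eta> - x) - azimuthal_angle e \<eta>) \<partial>lborel)"
  define h where "h = (\<lambda>t. exp (norm \<eta> powr \<gamma> * (1 - t powr \<gamma>)) * norm \<eta>
            * P / t powr cc * Iw t)"
  define A where "A = \<beta> powr cc * exp (norm \<eta> powr \<gamma> * (1 - \<beta> powr (-\<gamma>))) * \<psi> ((1 / \<beta>) *\<^sub>R \<eta>)"
  have unf: "renorm_op e \<gamma> \<beta> \<psi> \<eta> = A + \<gamma> * (LBINT t=1..T. h t)"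
    unfolding renorm_op_def Let_def A_def h_def Iw_def P_def cc_def T_def by simp
  have Iwb: "\<bar>Iw t\<bar> \<le> k^2 * (K * exp (- (t * r)) * ((t * r) powr \<sigma> + (t * r) powr (\<sigma> + \<gamma> - 1)))" if t: "t \<ge> 1" for t
  proof -
    define y where "y = t *\<^sub>R \<eta>"
    have y: "y \<noteq> 0" using t \<eta> by (simp add: y_def)
    have ny: "norm y = t * r" using t by (simp add: y_def r_def)
    have "Iw t = (\<integral>x. \<psi> x * \<psi> (y - x) * (cos (azimuthal_angle e x - azimuthal_angle e \<eta>)
                 * sin (azimuthal_angle e (y - x) - azimuthal_angle e \<eta>)) \<partial>lborel)"
      unfolding Iw_def y_def by (simp add: mult.assoc)
    also have "\<bar>\<dots>\<bar> \<le> k^2 * (K * exp (- norm y) * (norm y powr \<sigma> + norm y powr (\<sigma> + \<gamma> - 1)))"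
    proof (rule inner_bound)
      show "0 \<le> k" using k by simp
      show "0 \<le> K * exp (- norm y) * (norm y powr \<sigma> + norm y powr (\<sigma> + \<gamma> - 1))" using K by simp
      show "\<bar>\<psi> x\<bar> \<le> k * (norm x powr \<sigma> * exp (- norm x))" if "x \<noteq> 0" for x
        using \<psi>b[OF that] by (simp add: mult.assoc)
      show "\<bar>cos (azimuthal_angle e x - azimuthal_angle e \<eta>) * sin (azimuthal_angle e (y - x) - azimuthal_angle e \<eta>)\<bar> \<le> 1" for x
        by (simp add: abs_mult mult_le_one)
      show "(\<integral>\<^sup>+x. ennreal (norm x powr \<sigma> * exp (- norm x) * (norm (y - x) powr \<sigma> * exp (- norm (y - x)))) \<partial>lborel)
         \<le> ennreal (K * exp (- norm y) * (norm y powr \<sigma> + norm y powr (\<sigma> + \<gamma> - 1)))"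
        by (rule Kb[OF y])
    qed
    finally show ?thesis unfolding ny .
  qed
  have hb: "\<bar>h t\<bar> \<le> k * r powr \<sigma> / \<gamma> * q t" if t: "t \<ge> 1" for t
    unfolding h_def q_def \<phi>_def r_def[symmetric]
    by (rule pw[OF r t \<gamma> k K kK1 kK2 a_def _ P Iwb[OF t]]) (use cle in \<open>simp add: cc_def\<close>)
  define C where "C = k * r powr \<sigma> / \<gamma>"
  have C: "C \<ge> 0" using k \<gamma> by (simp add: C_def)
  have int_q: "set_integrable lborel {1..T} (\<lambda>t. C * q t)"
    by (rule borel_integrable_atLeastAtMost') (intro continuous_intros cq)
  have Lb: "\<bar>LBINT t=1..T. h t\<bar> \<le> C * (g 1 - g T)"
  proof -
    have e1: "(LBINT t=1..T. h t) = (LBINT t : {1..T}. h t)"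
      using interval_integral_Icc[of 1 T h] T by (simp add: one_ereal_def)
    have e2: "(LBINT t=1..T. q t) = (LBINT t : {1..T}. q t)"
      using interval_integral_Icc[of 1 T q] T by (simp add: one_ereal_def)
    have "ennreal \<bar>LBINT t : {1..T}. h t\<bar> \<le> (\<integral>\<^sup>+t. ennreal (norm (indicator {1..T} t *\<^sub>R h t)) \<partial>lborel)"
      unfolding set_lebesgue_integral_def using norm_integral_le_nn[of lborel "\<lambda>t. indicator {1..T} t *\<^sub>R h t"] by simp
    also have "\<dots> \<le> (\<integral>\<^sup>+t. ennreal (indicator {1..T} t *\<^sub>R (C * q t)) \<partial>lborel)"
    proof (rule nn_integral_mono)
      fix t
      show "ennreal (norm (indicator {1..T} t *\<^sub>R h t)) \<le> ennreal (indicator {1..T} t *\<^sub>R (C * q t))"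
        using hb[of t] by (auto simp: indicator_def C_def intro!: ennreal_leI)
    qed
    also have "\<dots> = ennreal (\<integral>t. indicator {1..T} t *\<^sub>R (C * q t) \<partial>lborel)"
    proof (rule nn_integral_eq_integral)
      show "integrable lborel (\<lambda>t. indicator {1..T} t *\<^sub>R (C * q t))"
        using int_q by (simp add: set_integrable_def)
      show "AE t in lborel. 0 \<le> indicator {1..T} t *\<^sub>R (C * q t)"
        using qnn C by (auto simp: indicator_def)
    qed
    also have "(\<integral>t. indicator {1..T} t *\<^sub>R (C * q t) \<partial>lborel) = C * (LBINT t : {1..T}. q t)"
    proof -
      have "(\<lambda>t. indicator {1..T} t *\<^sub>R (C * q t)) = (\<lambda>t. C * (indicator {1..T} t *\<^sub>R q t))"
        by (simp add: algebra_simps)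
      then show ?thesis unfolding set_lebesgue_integral_def by (simp only: integral_mult_right_zero)
    qed
    also have "\<dots> = C * (g 1 - g T)" using e2 ftc by simp
    finally have fin: "ennreal \<bar>LBINT t : {1..T}. h t\<bar> \<le> ennreal (C * (g 1 - g T))" .
    have "0 \<le> (\<integral>t. indicator {1..T} t *\<^sub>R (C * q t) \<partial>lborel)"
      by (rule integral_nonneg_AE) (use qnn C in \<open>auto simp: indicator_def\<close>)
    also have "(\<integral>t. indicator {1..T} t *\<^sub>R (C * q t) \<partial>lborel) = C * (LBINT t : {1..T}. q t)"
    proof -
      have "(\<lambda>t. indicator {1..T} t *\<^sub>R (C * q t)) = (\<lambda>t. C * (indicator {1..T} t *\<^sub>R q t))"
        by (simp add: algebra_simps)
      then show ?thesis unfolding set_lebesgue_integral_def by (simp only: integral_mult_right_zero)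
    qed
    also have "\<dots> = C * (g 1 - g T)" using e2 ftc by simp
    finally have "0 \<le> C * (g 1 - g T)" .
    then show ?thesis unfolding e1 using fin by (simp add: ennreal_le_iff)
  qed
  have Ab: "\<bar>A\<bar> < k * r powr \<sigma> * g T"
  proof -
    have TE: "(1 / \<beta>) *\<^sub>R \<eta> = T *\<^sub>R \<eta>" by (simp add: T_def)
    have nT: "norm (T *\<^sub>R \<eta>) = T * r" using T by (simp add: r_def)
    have pos: "\<beta> powr cc * exp (norm \<eta> powr \<gamma> * (1 - \<beta> powr (-\<gamma>))) > 0" using \<beta> by simp
    have "\<bar>A\<bar> = \<beta> powr cc * exp (norm \<eta> powr \<gamma> * (1 - \<beta> powr (-\<gamma>))) * \<bar>\<psi> (T *\<^sub>R \<eta>)\<bar>"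
      unfolding A_def TE using pos by (simp add: abs_mult)
    also have "\<dots> < \<beta> powr cc * exp (norm \<eta> powr \<gamma> * (1 - \<beta> powr (-\<gamma>))) * (k * (T * r) powr \<sigma> * exp (- 1 * (T * r)))"
      using \<psi>b[of "T *\<^sub>R \<eta>"] T \<eta> pos nT by (intro mult_strict_left_mono) auto
    also have "\<dots> = k * r powr \<sigma> * g T"
    proof -
      have b1: "\<beta> powr cc = T powr (- cc)" using \<beta> by (simp add: T_def powr_minus_divide powr_divide)
      have b2: "\<beta> powr (-\<gamma>) = T powr \<gamma>" using \<beta> by (simp add: T_def powr_minus_divide powr_divide)
      have b3: "(T * r) powr \<sigma> = T powr \<sigma> * r powr \<sigma>" by (simp add: powr_mult)
      have b4: "T powr a = T powr \<sigma> * T powr (- cc)" by (simp add: a_def powr_add[symmetric])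
      have b5: "exp (r powr \<gamma> * (1 - T powr \<gamma>)) * exp (- 1 * (T * r)) = exp (\<phi> T)"
        by (simp add: \<phi>_def exp_add[symmetric] algebra_simps)
      have "\<beta> powr cc * exp (norm \<eta> powr \<gamma> * (1 - \<beta> powr (-\<gamma>))) * (k * (T * r) powr \<sigma> * exp (- 1 * (T * r)))
        = k * r powr \<sigma> * (T powr \<sigma> * T powr (- cc)) * (exp (r powr \<gamma> * (1 - T powr \<gamma>)) * exp (- 1 * (T * r)))"
        unfolding b1 b2 b3 r_def[symmetric] by (simp only: mult_ac)
      also have "\<dots> = k * r powr \<sigma> * g T" unfolding b4[symmetric] b5 g_def by (simp only: mult_ac)
      finally show ?thesis .
    qed
    finally show ?thesis .
  qed
  have g1: "g 1 = exp (- r)" by (simp add: g_def \<phi>_def)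
  have "\<bar>renorm_op e \<gamma> \<beta> \<psi> \<eta>\<bar> \<le> \<bar>A\<bar> + \<gamma> * \<bar>LBINT t=1..T. h t\<bar>"
    unfolding unf using \<gamma> by (simp add: abs_mult abs_triangle_ineq[THEN order_trans])
  also have "\<dots> < k * r powr \<sigma> * g T + \<gamma> * (C * (g 1 - g T))"
    using Ab Lb \<gamma> by (intro add_less_le_mono mult_left_mono) auto
  also have "\<gamma> * (C * (g 1 - g T)) = k * r powr \<sigma> * (g 1 - g T)" using \<gamma> by (simp add: C_def)
  finally show ?thesis unfolding g1 r_def by (simp add: algebra_simps)
qed


theorem proposition8p1:
  fixes \<sigma> \<gamma> :: real and e :: "nat \<Rightarrow> 'n::finite"
  assumes "CARD('n) \<ge> 2"
    and "bij_betw e {..<CARD('n)} UNIV"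
    and "max (- real CARD('n)) (-3) < \<sigma>" and "\<sigma> < 0"
    and "\<sigma> \<noteq> -2" and "\<sigma> \<noteq> - real CARD('n) / 2"
    and "\<gamma> - real CARD('n) - 1 \<ge> \<sigma>"
  shows "\<exists>k>0. \<exists>b>0. \<forall>\<beta>. 0 < \<beta> \<and> \<beta> < 1 \<longrightarrow>
           (\<forall>\<psi>\<in>(M_set \<sigma> k b :: (real^'n \<Rightarrow> real) set). renorm_op e \<gamma> \<beta> \<psi> \<in> M_set \<sigma> k b)"
proof -
  have \<sigma>: "\<sigma> < 0" by fact
  have m: "\<sigma> + real DIM(real^'n) > 0" using assms(3) by simp
  have g: "\<sigma> + real DIM(real^'n) \<le> \<gamma> - 1" using assms(7) by simp
  obtain K where K: "K > 0" and Kb: "\<And>y::real^'n. y \<noteq> 0 \<Longrightarrow>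
    (\<integral>\<^sup>+x. ennreal (norm x powr \<sigma> * exp (- norm x) * (norm (y - x) powr \<sigma> * exp (- norm (y - x)))) \<partial>lborel)
      \<le> ennreal (K * exp (- norm y) * (norm y powr \<sigma> + norm y powr (\<sigma> + \<gamma> - 1)))"
    using conv_bound[where 'a="real^'n", OF \<sigma> m g] by blast
  have \<gamma>: "\<gamma> > 0" using assms(3) assms(7) by simp
  define k where "k = min \<gamma> 1 / (\<gamma> * K)"
  have k: "k > 0" using \<gamma> K by (simp add: k_def)
  have kK1: "\<gamma> * k * K \<le> 1" using \<gamma> K by (simp add: k_def)
  have kK2: "k * K \<le> 1"
  proof -
    have "k * K = min \<gamma> 1 / \<gamma>" using \<gamma> K by (simp add: k_def)
    also have "\<dots> \<le> 1" using \<gamma> by (simp add: min_def)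
    finally show ?thesis .
  qed
  show ?thesis
  proof (rule exI[of _ k], rule conjI[OF k], rule exI[of _ "1::real"], rule conjI[OF zero_less_one], intro allI impI ballI)
    fix \<beta> :: real and \<psi> :: "real^'n \<Rightarrow> real"
    assume \<beta>: "0 < \<beta> \<and> \<beta> < 1" and \<psi>: "\<psi> \<in> M_set \<sigma> k 1"
    have m\<psi>: "\<psi> \<in> borel_measurable lborel" and \<psi>b: "\<And>\<eta>. \<eta> \<noteq> 0 \<Longrightarrow> \<bar>\<psi> \<eta>\<bar> < k * norm \<eta> powr \<sigma> * exp (- 1 * norm \<eta>)"
      using \<psi> unfolding M_set_def by auto
    show "renorm_op e \<gamma> \<beta> \<psi> \<in> M_set \<sigma> k 1"
      unfolding M_set_def
    proof (intro CollectI conjI allI impI)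
      show "renorm_op e \<gamma> \<beta> \<psi> \<in> borel_measurable lborel" by (rule meas_renorm[OF m\<psi>])
      fix \<eta> :: "real^'n" assume \<eta>: "\<eta> \<noteq> 0"
      show "\<bar>renorm_op e \<gamma> \<beta> \<psi> \<eta>\<bar> < k * norm \<eta> powr \<sigma> * exp (- 1 * norm \<eta>)"
        by (rule main_bound[OF \<gamma> \<sigma> assms(7) _ _ k _ kK1 kK2 \<psi>b Kb \<eta>]) (use \<beta> K in auto)
    qed
  qed
qed

end
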